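(* Let $G$ be a connected undirected graph without self-loops on $n$ vertices with degrees $d_i$ and Laplacian $L$, let $C=\mathrm{diag}(c_1,\dots,c_n)$ with positive rationals $c_i$ encoded over $O(\log n)$ bits and $c_id_i<1$, and let $P=I_n-CL$. Then $P$ has real eigenvalues $1=\lambda_1>\lambda_2\ge\cdots\ge\lambda_n>-1$, and $\mu:=\max_{k>1}|\lambda_k|$ satisfies $\mu\le1-n^{-O(1)}$.
   Context: $O(\cdot)$ hides absolute constants; $n$ is assumed large. *)

theory Defs
  imports "Jordan_Normal_Form.Char_Poly"
begin

text \<open>Graph on vertex set {0..<n}, given by an adjacency predicate E.\<close>

definition undirected_loopless :: "nat \<Rightarrow> (nat \<Rightarrow> nat \<Rightarrow> bool) \<Rightarrow> bool" where
  "undirected_loopless n E \<longleftrightarrow> (\<forall>i j. E i j \<longrightarrow> E j i) \<and> (\<forall>i. \<not> E i i)"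

definition graph_connected :: "nat \<Rightarrow> (nat \<Rightarrow> nat \<Rightarrow> bool) \<Rightarrow> bool" where
  "graph_connected n E \<longleftrightarrow>
     (\<forall>i<n. \<forall>j<n. (\<lambda>a b. a < n \<and> b < n \<and> E a b)\<^sup>*\<^sup>* i j)"

definition vdegree :: "nat \<Rightarrow> (nat \<Rightarrow> nat \<Rightarrow> bool) \<Rightarrow> nat \<Rightarrow> nat" where
  "vdegree n E i = card {j. j < n \<and> E i j}"

definition laplacian :: "nat \<Rightarrow> (nat \<Rightarrow> nat \<Rightarrow> bool) \<Rightarrow> real mat" where
  "laplacian n E = mat n n (\<lambda>(i,j). (if i = j then real (vdegree n E i) else 0)
                                    - (if E i j then 1 else 0))"

definition diag_mat :: "nat \<Rightarrow> (nat \<Rightarrow> real) \<Rightarrow> real mat" where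
  "diag_mat n c = mat n n (\<lambda>(i,j). if i = j then c i else 0)"

text \<open>A positive rational encodable with O(log n) bits, i.e. with numerator
  and denominator bounded by n^K.\<close>
definition small_pos_rational :: "nat \<Rightarrow> nat \<Rightarrow> real \<Rightarrow> bool" where
  "small_pos_rational n K x \<longleftrightarrow>
     (\<exists>p q :: nat. 0 < p \<and> 0 < q \<and> p \<le> n ^ K \<and> q \<le> n ^ K \<and> x = real p / real q)"

end

theory Submission
  imports Defs "Jordan_Normal_Form.Jordan_Normal_Form_Existence" "Jordan_Normal_Form.Jordan_Normal_Form_Uniqueness" "HOL-Computational_Algebra.Fundamental_Theorem_Algebra"
begin

interpretation mpr: map_poly_inj_comm_ring_hom "of_real :: real \<Rightarrow> complex" ..

lemma order_prod_linear: "Polynomial.order a (\<Prod>r\<leftarrow>rs. [:- r, 1:]) = count (mset rs) (a::'a::idom)"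
proof (induction rs)
  case Nil thus ?case by (simp add: order_0I)
next
  case (Cons r rs)
  have nz: "(\<Prod>r\<leftarrow>rs. [:- r, 1:]) \<noteq> (0 :: 'a poly)" by (auto simp: prod_list_zero_iff)
  have "Polynomial.order a (\<Prod>r\<leftarrow>r # rs. [:- r, 1:]) = Polynomial.order a ([:- r, 1:] * (\<Prod>r\<leftarrow>rs. [:- r, 1:]))" by simp
  also have "\<dots> = Polynomial.order a [:- r, 1:] + Polynomial.order a (\<Prod>r\<leftarrow>rs. [:- r, 1:])"
    by (rule order_mult) (metis nz mult_eq_0_iff pCons_eq_0_iff one_neq_zero)
  also have "\<dots> = (if a = r then 1 else 0) + count (mset rs) a" unfolding Cons order_linear' by auto
  finally show ?case by simp
qed

lemma min2_sum: "0 \<notin> set xs \<Longrightarrow> sum_list (map (min 2) xs) \<le> (1::nat) \<Longrightarrow> sum_list xs \<le> 1"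
proof (induction xs)
  case Nil thus ?case by simp
next
  case (Cons x xs)
  thus ?case by (cases xs) (auto simp: min_def split: if_splits)
qed

locale grph =
  fixes n :: nat and E :: "nat \<Rightarrow> nat \<Rightarrow> bool"
  assumes symE: "\<And>i j. E i j \<Longrightarrow> E j i" and irrE: "\<And>i. \<not> E i i"
begin

definition Lap :: "(nat \<Rightarrow> 'a::comm_ring_1) \<Rightarrow> nat \<Rightarrow> 'a" where
  "Lap f i = (\<Sum>j<n. if E i j then f i - f j else 0)"

lemma swap: "(\<Sum>i<n. \<Sum>j<n. if E i j then F j i else 0) = (\<Sum>i<n. \<Sum>j<n. if E i j then F i j else 0)"
proof -
  have "(\<Sum>i<n. \<Sum>j<n. if E i j then F j i else 0) = (\<Sum>j<n. \<Sum>i<n. if E i j then F j i else 0)"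
    by (rule sum.swap)
  also have "\<dots> = (\<Sum>j<n. \<Sum>i<n. if E j i then F j i else 0)"
    by (intro sum.cong refl) (metis symE)
  finally show ?thesis .
qed

lemma sum_Lap: "(\<Sum>i<n. Lap f i) = 0"
proof -
  have "(\<Sum>i<n. Lap f i) = (\<Sum>i<n. \<Sum>j<n. if E i j then f i else 0) - (\<Sum>i<n. \<Sum>j<n. if E i j then f j else 0)"
    unfolding Lap_def by (simp add: sum_subtractf[symmetric] if_distrib if_distribR) (intro sum.cong refl, auto)
  also have "\<dots> = 0" using swap[of "\<lambda>i j. f j"] by simp
  finally show ?thesis .
qed

lemma quad_real: "(\<Sum>i<n. f i * Lap f i) = (\<Sum>i<n. \<Sum>j<n. if E i j then (f i - f j)^2 else 0) / (2::real)"
proof -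
  have a: "(\<Sum>i<n. f i * Lap f i) = (\<Sum>i<n. \<Sum>j<n. if E i j then f i * (f i - f j) else 0)"
    unfolding Lap_def sum_distrib_left by (intro sum.cong refl) simp
  have b: "(\<Sum>i<n. \<Sum>j<n. if E i j then f j * (f j - f i) else 0) = (\<Sum>i<n. \<Sum>j<n. if E i j then f i * (f i - f j) else 0)"
    using swap[of "\<lambda>i j. f i * (f i - f j)"] by simp
  have "2 * (\<Sum>i<n. f i * Lap f i) = (\<Sum>i<n. \<Sum>j<n. if E i j then f i * (f i - f j) else 0) + (\<Sum>i<n. \<Sum>j<n. if E i j then f j * (f j - f i) else 0)"
    using a b by simp
  also have "\<dots> = (\<Sum>i<n. \<Sum>j<n. if E i j then (f i - f j)^2 else 0)"
    unfolding sum.distrib[symmetric] by (intro sum.cong refl) (simp add: power2_eq_square algebra_simps)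
  finally show ?thesis by simp
qed

lemma quad_cplx: "(\<Sum>i<n. cnj (f i) * Lap f i) = of_real ((\<Sum>i<n. \<Sum>j<n. if E i j then (cmod (f i - f j))^2 else 0) / 2)"
proof -
  have a: "(\<Sum>i<n. cnj (f i) * Lap f i) = (\<Sum>i<n. \<Sum>j<n. if E i j then cnj (f i) * (f i - f j) else 0)"
    unfolding Lap_def sum_distrib_left by (intro sum.cong refl) simp
  have b: "(\<Sum>i<n. \<Sum>j<n. if E i j then cnj (f j) * (f j - f i) else 0) = (\<Sum>i<n. \<Sum>j<n. if E i j then cnj (f i) * (f i - f j) else 0)"
    using swap[of "\<lambda>i j. cnj (f i) * (f i - f j)"] by simp
  have "2 * (\<Sum>i<n. cnj (f i) * Lap f i) = (\<Sum>i<n. \<Sum>j<n. if E i j then cnj (f i) * (f i - f j) else 0) + (\<Sum>i<n. \<Sum>j<n. if E i j then cnj (f j) * (f j - f i) else 0)"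
    using a b by simp
  also have "\<dots> = (\<Sum>i<n. \<Sum>j<n. if E i j then of_real ((cmod (f i - f j))^2) else 0)"
  proof -
    have pt: "cnj a * (a - b) + cnj b * (b - a) = of_real ((cmod (a - b))^2)" for a b :: complex
    proof -
      have "cnj a * (a - b) + cnj b * (b - a) = (a - b) * cnj (a - b)" by (simp add: algebra_simps)
      also have "\<dots> = of_real ((cmod (a - b))^2)" by (subst complex_norm_square) simp
      finally show ?thesis .
    qed
    show ?thesis unfolding sum.distrib[symmetric] by (intro sum.cong refl) (simp add: pt)
  qed
  also have "\<dots> = of_real (\<Sum>i<n. \<Sum>j<n. if E i j then (cmod (f i - f j))^2 else 0)"
    unfolding of_real_sum by (intro sum.cong refl) simp
  finally show ?thesis by (simp add: mult.commute)
qed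

lemma deg_sum: "(of_nat (vdegree n E i) :: 'a::comm_semiring_1) = (\<Sum>j<n. if E i j then 1 else 0)"
proof -
  have "{j. j<n \<and> E i j} = {j\<in>{..<n}. E i j}" by auto
  hence "(of_nat (vdegree n E i) :: 'a) = (\<Sum>j\<in>{j\<in>{..<n}. E i j}. 1)"
    unfolding vdegree_def by simp
  also have "\<dots> = (\<Sum>j<n. if E i j then 1 else 0)" by (rule sum.inter_filter) simp
  finally show ?thesis .
qed

lemma Lap_alt: "Lap f i = of_nat (vdegree n E i) * f i - (\<Sum>j<n. if E i j then f j else 0)"
  unfolding deg_sum Lap_def sum_distrib_right sum_subtractf[symmetric]
  by (intro sum.cong refl) simp

lemma delta_sum0: "finite A \<Longrightarrow> i \<in> A \<Longrightarrow> (\<Sum>k\<in>A. (if i = k then a else 0) * g k) = a * (g i :: 'a :: comm_semiring_1)"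
proof -
  assume "finite A" "i \<in> A"
  have "(\<Sum>k\<in>A. (if i = k then a else 0) * g k) = (\<Sum>k\<in>A. if k = i then a * g i else 0)"
    by (rule sum.cong) auto
  also have "\<dots> = a * g i" using \<open>finite A\<close> \<open>i \<in> A\<close> by simp
  finally show ?thesis .
qed

lemma delta_sum': "i < n \<Longrightarrow> (\<Sum>k<n. (if i = k then g k else 0)) = (g i :: 'a :: comm_semiring_1)"
  using delta_sum0[of "{..<n}" i 1 g] by simp

definition Pm :: "(nat \<Rightarrow> real) \<Rightarrow> real mat" where
  "Pm c = 1\<^sub>m n - diag_mat n c * laplacian n E"

lemma Pm_carrier: "Pm c \<in> carrier_mat n n"
  unfolding Pm_def diag_mat_def laplacian_def by auto

lemma Pm_index: "i < n \<Longrightarrow> j < n \<Longrightarrow> Pm c $$ (i,j) =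
   (if i = j then 1 else 0) - c i * ((if i = j then real (vdegree n E i) else 0) - (if E i j then 1 else 0))"
  unfolding Pm_def diag_mat_def laplacian_def
  by (simp add: scalar_prod_def delta_sum0)

lemma Pm_mulv: assumes v: "v \<in> carrier_vec n" and i: "i < n"
  shows "(map_mat (of_real :: real \<Rightarrow> 'a::real_field) (Pm c) *\<^sub>v v) $ i = v $ i - of_real (c i) * Lap (\<lambda>j. v $ j) i"
proof -
  have "(map_mat (of_real :: real \<Rightarrow> 'a) (Pm c) *\<^sub>v v) $ i = (\<Sum>j<n. of_real (Pm c $$ (i,j)) * v $ j)"
    using v i Pm_carrier[of c] by (auto simp: scalar_prod_def intro!: sum.cong)
  also have "\<dots> = (\<Sum>j<n. (if i = j then v $ j else 0) - of_real (c i) * ((if i = j then of_nat (vdegree n E i) * v $ j else 0) - (if E i j then v $ j else 0)))"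
    by (intro sum.cong refl) (auto simp: Pm_index i algebra_simps)
  also have "\<dots> = v $ i - of_real (c i) * Lap (\<lambda>j. v $ j) i"
    unfolding Lap_alt sum_subtractf sum_distrib_left[symmetric] delta_sum'[OF i] by simp
  finally show ?thesis .
qed

lemma eig: assumes "eigenvector (map_mat (of_real :: real \<Rightarrow> 'a::real_field) (Pm c)) v r"
  shows "v \<in> carrier_vec n" "\<exists>i<n. v $ i \<noteq> 0"
    "\<And>i. i < n \<Longrightarrow> of_real (c i) * Lap (\<lambda>j. v $ j) i = (1 - r) * v $ i"
proof -
  have dr: "dim_row (map_mat (of_real :: real \<Rightarrow> 'a) (Pm c)) = n" using Pm_carrier[of c] by simp
  from assms[unfolded eigenvector_def dr]
  have v: "v \<in> carrier_vec n" and v0: "v \<noteq> 0\<^sub>v n" and ev: "map_mat of_real (Pm c) *\<^sub>v v = r \<cdot>\<^sub>v v" by auto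
  show "v \<in> carrier_vec n" by fact
  show "\<exists>i<n. v $ i \<noteq> 0"
  proof (rule ccontr)
    assume "\<not> ?thesis"
    hence "v = 0\<^sub>v n" using v by (intro eq_vecI) auto
    with v0 show False by simp
  qed
  fix i assume i: "i < n"
  have "(map_mat (of_real :: real \<Rightarrow> 'a) (Pm c) *\<^sub>v v) $ i = r * v $ i" using ev v i by simp
  thus "of_real (c i) * Lap (\<lambda>j. v $ j) i = (1 - r) * v $ i"
    unfolding Pm_mulv[OF v i] by (simp add: algebra_simps)
qed

end

locale lsetup = grph +
  fixes c :: "nat \<Rightarrow> real" and B :: real
  assumes cpos: "\<And>i. i < n \<Longrightarrow> c i > 0"
    and cB: "\<And>i. i < n \<Longrightarrow> 1 / c i \<le> B"
    and cd: "\<And>i. i < n \<Longrightarrow> c i * real (vdegree n E i) \<le> 1 - 1 / B"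
    and conn: "graph_connected n E"
    and B1: "B \<ge> 1"
    and npos: "n > 0"
begin

definition R where "R = {(a,b). a < n \<and> b < n \<and> E a b}"

lemma R_path: assumes "(x,y) \<in> R ^^ m" and "\<And>a b. (a,b) \<in> R \<Longrightarrow> \<bar>f a - f b\<bar> \<le> (s::real)"
  shows "\<bar>f x - f y\<bar> \<le> m * s"
  using assms(1)
proof (induction m arbitrary: y)
  case 0 thus ?case by simp
next
  case (Suc m)
  from Suc.prems obtain z where xz: "(x,z) \<in> R ^^ m" and zy: "(z,y) \<in> R" by auto
  have "\<bar>f x - f y\<bar> \<le> \<bar>f x - f z\<bar> + \<bar>f z - f y\<bar>" by simp
  also have "\<dots> \<le> m * s + s" using Suc.IH[OF xz] assms(2)[OF zy] by simp
  finally show ?case by (simp add: algebra_simps)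
qed

lemma conn_bound: assumes "\<And>a b. (a,b) \<in> R \<Longrightarrow> \<bar>f a - f b\<bar> \<le> (s::real)" and s: "s \<ge> 0"
  and i: "i < n" and j: "j < n"
  shows "\<bar>f i - f j\<bar> \<le> real n ^ 2 * s"
proof -
  have finR: "finite R" by (rule finite_subset[of _ "{..<n} \<times> {..<n}"]) (auto simp: R_def)
  have cR: "card R \<le> n * n"
    using card_mono[of "{..<n} \<times> {..<n}" R] by (auto simp: R_def card_cartesian_product)
  have "(\<lambda>a b. a < n \<and> b < n \<and> E a b)\<^sup>*\<^sup>* i j" using conn i j unfolding graph_connected_def by blast
  hence "(i,j) \<in> R\<^sup>*" unfolding R_def by (simp add: rtranclp_rtrancl_eq[symmetric])
  then obtain m where m: "m \<le> card R" and ij: "(i,j) \<in> R ^^ m"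
    unfolding rtrancl_finite_eq_relpow[OF finR] by auto
  have "\<bar>f i - f j\<bar> \<le> m * s" by (rule R_path[OF ij assms(1)])
  also have "\<dots> \<le> real n ^ 2 * s" using m cR s
    by (intro mult_right_mono) (auto simp: power2_eq_square simp flip: of_nat_mult)
  finally show ?thesis .
qed

lemma edge_le: fixes f :: "nat \<Rightarrow> real" assumes ab: "(a,b) \<in> R" shows "(f a - f b)^2 \<le> 2 * (\<Sum>i<n. f i * Lap f i)"
proof -
  from ab have a: "a < n" and b: "b < n" and e: "E a b" by (auto simp: R_def)
  have "(f a - f b)^2 = (if E a b then (f a - f b)^2 else 0)" using e by simp
  also have "\<dots> \<le> (\<Sum>j<n. if E a j then (f a - f j)^2 else 0)"
    by (rule member_le_sum[where f = "\<lambda>j. if E a j then (f a - f j)^2 else 0" and i = b]) (use b in auto)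
  also have "\<dots> \<le> (\<Sum>i<n. \<Sum>j<n. if E i j then (f i - f j)^2 else 0)"
    by (rule member_le_sum[where f = "\<lambda>i. (\<Sum>j<n. if E i j then (f i - f j)^2 else 0)"]) (use a in \<open>auto intro!: sum_nonneg\<close>)
  also have "\<dots> = 2 * (\<Sum>i<n. f i * Lap f i)" unfolding quad_real by simp
  finally show ?thesis .
qed

lemma Q_nonneg: "0 \<le> (\<Sum>i<n. f i * Lap f i :: real)"
  unfolding quad_real by (auto intro!: sum_nonneg divide_nonneg_nonneg)

lemma edge_abs: fixes f :: "nat \<Rightarrow> real" shows "(a,b) \<in> R \<Longrightarrow> \<bar>f a - f b\<bar> \<le> sqrt (2 * (\<Sum>i<n. f i * Lap f i))"
  by (rule real_le_rsqrt) (simp add: edge_le)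

lemma Lap0_const: assumes "\<And>i. i < n \<Longrightarrow> Lap f i = (0::real)" and i: "i < n" and j: "j < n"
  shows "f i = f j"
proof -
  have "(\<Sum>i<n. f i * Lap f i) = 0" using assms(1) by simp
  hence "\<bar>f i - f j\<bar> \<le> real n ^ 2 * 0"
    using conn_bound[of f 0, OF _ _ i j] edge_abs[of _ _ f] by simp
  thus ?thesis by simp
qed

lemma eig_real_of_complex: assumes ev: "eigenvector (map_mat (of_real :: real \<Rightarrow> complex) (Pm c)) v r"
  shows "Im r = 0"
proof -
  define f where "f = (\<lambda>j. v $ j)"
  note e = eig[OF ev, folded f_def]
  obtain i1 where i1: "i1 < n" "f i1 \<noteq> 0" using e(2) by auto
  define W where "W = (\<Sum>i<n. (cmod (f i))^2 / c i)"
  have Wpos: "W > 0"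
  proof -
    have "0 < (cmod (f i1))^2 / c i1" using i1 cpos[OF i1(1)] by simp
    also have "\<dots> \<le> W" unfolding W_def
      by (rule member_le_sum) (use i1 cpos in \<open>auto intro!: divide_nonneg_pos\<close>)
    finally show ?thesis .
  qed
  have pt: "cnj (f i) * Lap f i = (1 - r) * of_real ((cmod (f i))^2 / c i)" if i: "i < n" for i
  proof -
    have ci: "c i > 0" using cpos[OF i] by simp
    have "of_real (c i) * (cnj (f i) * Lap f i) = cnj (f i) * (of_real (c i) * Lap f i)" by (simp add: ac_simps)
    also have "\<dots> = cnj (f i) * ((1 - r) * f i)" using e(3)[OF i] by simp
    also have "\<dots> = (1 - r) * (f i * cnj (f i))" by (simp add: algebra_simps)
    also have "\<dots> = (1 - r) * of_real ((cmod (f i))^2)" by (subst complex_norm_square) simp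
    finally have "of_real (c i) * (cnj (f i) * Lap f i) = (1 - r) * of_real ((cmod (f i))^2)" .
    hence "cnj (f i) * Lap f i = (1 - r) * of_real ((cmod (f i))^2) / of_real (c i)"
      using ci by (simp add: field_simps)
    thus ?thesis by (simp add: of_real_divide)
  qed
  have "(\<Sum>i<n. cnj (f i) * Lap f i) = (1 - r) * of_real W"
    unfolding W_def of_real_sum sum_distrib_left by (intro sum.cong refl) (simp add: pt)
  hence q: "(1 - r) * of_real W = of_real ((\<Sum>i<n. \<Sum>j<n. if E i j then (cmod (f i - f j))\<^sup>2 else 0) / 2)"
    unfolding quad_cplx by simp
  define q where "q = (\<Sum>i<n. \<Sum>j<n. if E i j then (cmod (f i - f j))\<^sup>2 else 0) / 2"
  have "(1 - r) * of_real W = of_real q" using q unfolding q_def .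
  hence "1 - r = of_real q / of_real W" using Wpos by (simp add: eq_divide_eq)
  hence "1 - r = of_real (q / W)" by (simp add: of_real_divide)
  hence "Im (1 - r) = 0" by simp
  thus ?thesis by simp
qed


lemma eig_real: assumes ev: "eigenvector (Pm c) v r"
  shows "\<exists>i<n. v $ i \<noteq> 0" "\<And>i. i < n \<Longrightarrow> c i * Lap (\<lambda>j. v $ j) i = (1 - r) * v $ i"
proof -
  have "map_mat (of_real :: real \<Rightarrow> real) (Pm c) = Pm c" by (intro eq_matI) auto
  with ev have ev': "eigenvector (map_mat (of_real :: real \<Rightarrow> real) (Pm c)) v r" by simp
  from eig[OF ev'] show "\<exists>i<n. v $ i \<noteq> 0" "\<And>i. i < n \<Longrightarrow> c i * Lap (\<lambda>j. v $ j) i = (1 - r) * v $ i"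
    by auto
qed

lemma max_idx: assumes "\<exists>i<n. f i \<noteq> (0::real)"
  obtains i0 where "i0 < n" "\<And>j. j < n \<Longrightarrow> \<bar>f j\<bar> \<le> \<bar>f i0\<bar>" "\<bar>f i0\<bar> > 0"
proof -
  from assms obtain i1 where i1: "i1 < n" "f i1 \<noteq> 0" by auto
  define M where "M = Max ((\<lambda>j. \<bar>f j\<bar>) ` {..<n})"
  have "M \<in> (\<lambda>j. \<bar>f j\<bar>) ` {..<n}" unfolding M_def using i1 by (intro Max_in) auto
  then obtain i0 where i0: "i0 < n" "M = \<bar>f i0\<bar>" by auto
  have le: "\<bar>f j\<bar> \<le> \<bar>f i0\<bar>" if "j < n" for j
    unfolding i0(2)[symmetric] M_def using that by (intro Max_ge) auto
  have "\<bar>f i0\<bar> > 0" using le[OF i1(1)] i1(2) by linarith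
  with i0 le show ?thesis using that by blast
qed

lemma ev_lower: assumes ev: "eigenvector (Pm c) v r" shows "-1 + 2 / B \<le> r"
proof -
  define f where "f = (\<lambda>j. v $ j)"
  note e = eig_real[OF ev, folded f_def]
  obtain i0 where i0: "i0 < n" "\<And>j. j < n \<Longrightarrow> \<bar>f j\<bar> \<le> \<bar>f i0\<bar>" "\<bar>f i0\<bar> > 0"
    using max_idx[OF e(1)] by blast
  define \<nu> where "\<nu> = 1 - r"
  have ci: "c i0 > 0" using cpos[OF i0(1)] .
  have "\<nu> * (f i0)^2 = f i0 * (c i0 * Lap f i0)" using e(2)[OF i0(1)] unfolding \<nu>_def by (simp add: power2_eq_square)
  also have "\<dots> = c i0 * (\<Sum>j<n. if E i0 j then (f i0)^2 - f i0 * f j else 0)"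
    unfolding Lap_def sum_distrib_left by (intro sum.cong refl) (simp add: power2_eq_square algebra_simps)
  also have "\<dots> \<le> c i0 * (\<Sum>j<n. if E i0 j then 2 * (f i0)^2 else 0)"
  proof (intro mult_left_mono sum_mono)
    fix j assume j: "j \<in> {..<n}"
    have "\<bar>f i0 * f j\<bar> \<le> \<bar>f i0\<bar> * \<bar>f i0\<bar>" using i0(2)[of j] j unfolding abs_mult by (intro mult_left_mono) auto
    hence "- (f i0 * f j) \<le> (f i0)^2" by (simp add: power2_eq_square abs_le_iff)
    thus "(if E i0 j then (f i0)^2 - f i0 * f j else 0) \<le> (if E i0 j then 2 * (f i0)^2 else 0)" by simp
  qed (use ci in simp)
  also have "\<dots> = 2 * (c i0 * real (vdegree n E i0)) * (f i0)^2"
    unfolding deg_sum sum_distrib_left sum_distrib_right by (intro sum.cong refl) simp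
  also have "\<dots> \<le> 2 * (1 - 1 / B) * (f i0)^2"
    using cd[OF i0(1)] by (intro mult_right_mono) auto
  finally have "\<nu> * (f i0)^2 \<le> 2 * (1 - 1 / B) * (f i0)^2" .
  moreover have "(f i0)^2 > 0" using i0(3) by simp
  ultimately have "\<nu> \<le> 2 * (1 - 1 / B)" by simp
  thus ?thesis unfolding \<nu>_def by (simp add: algebra_simps)
qed


lemma ev_upper: assumes ev: "eigenvector (Pm c) v r"
  shows "r \<le> 1" "r \<noteq> 1 \<Longrightarrow> r \<le> 1 - 1 / (2 * real n ^ 5 * B)"
proof -
  define f where "f = (\<lambda>j. v $ j)"
  note e = eig_real[OF ev, folded f_def]
  obtain i0 where i0: "i0 < n" "\<And>j. j < n \<Longrightarrow> \<bar>f j\<bar> \<le> \<bar>f i0\<bar>" "\<bar>f i0\<bar> > 0"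
    using max_idx[OF e(1)] by blast
  define \<nu> where "\<nu> = 1 - r"
  define W where "W = (\<Sum>i<n. (f i)^2 / c i)"
  define Q where "Q = (\<Sum>i<n. f i * Lap f i)"
  have Wpos: "W > 0"
  proof -
    have "0 < (f i0)^2 / c i0" using i0 cpos[OF i0(1)] by simp
    also have "\<dots> \<le> W" unfolding W_def
      by (rule member_le_sum) (use i0 cpos in \<open>auto intro!: divide_nonneg_pos\<close>)
    finally show ?thesis .
  qed
  have pt: "f i * Lap f i = \<nu> * ((f i)^2 / c i)" if i: "i < n" for i
  proof -
    have ci: "c i > 0" using cpos[OF i] by simp
    have "c i * (f i * Lap f i) = f i * (c i * Lap f i)" by (simp add: ac_simps)
    also have "\<dots> = \<nu> * (f i)^2" using e(2)[OF i] unfolding \<nu>_def by (simp add: power2_eq_square)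
    finally show ?thesis using ci by (simp add: field_simps)
  qed
  have QW: "Q = \<nu> * W" unfolding Q_def W_def sum_distrib_left by (intro sum.cong refl) (simp add: pt)
  have Q0: "Q \<ge> 0" unfolding Q_def by (rule Q_nonneg)
  have nu0: "\<nu> \<ge> 0"
  proof (rule ccontr)
    assume "\<not> ?thesis"
    hence "\<nu> * W < 0" using Wpos by (simp add: mult_neg_pos)
    with QW Q0 show False by simp
  qed
  thus "r \<le> 1" unfolding \<nu>_def by simp
  assume r1: "r \<noteq> 1"
  hence nu: "\<nu> > 0" using nu0 unfolding \<nu>_def by simp
  have "0 = (\<Sum>i<n. Lap f i)" using sum_Lap by simp
  also have "\<dots> = (\<Sum>i<n. \<nu> * (f i / c i))"
  proof (intro sum.cong refl)
    fix i assume "i \<in> {..<n}"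
    hence i: "i < n" by simp
    show "Lap f i = \<nu> * (f i / c i)" using e(2)[OF i] cpos[OF i] unfolding \<nu>_def by (simp add: field_simps)
  qed
  also have "\<dots> = \<nu> * (\<Sum>i<n. f i / c i)" by (rule sum_distrib_left[symmetric])
  finally have S0: "(\<Sum>i<n. f i / c i) = 0" using nu by simp
  obtain j where j: "j < n" "f j * f i0 \<le> 0"
  proof (rule ccontr)
    assume "\<not> thesis"
    hence pos: "\<And>j. j < n \<Longrightarrow> f j * f i0 > 0" using that by force
    have "0 < (\<Sum>j<n. (f j * f i0) / c j)"
      using i0(1) pos cpos by (intro sum_pos) auto
    also have "\<dots> = f i0 * (\<Sum>j<n. f j / c j)" unfolding sum_distrib_left by (intro sum.cong refl) simp
    finally show False using S0 by simp
  qed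
  have M2: "(f i0)^2 \<le> (f i0 - f j)^2" 
  proof -
    have a: "f i0 * f j \<le> 0" using j(2) by (simp add: mult.commute)
    have b: "0 \<le> f j * f j" by simp
    have "(f i0 - f j)^2 = (f i0)^2 - 2 * (f i0 * f j) + f j * f j" by (simp add: power2_eq_square algebra_simps)
    thus ?thesis using a b by linarith
  qed
  have "\<bar>f i0 - f j\<bar> \<le> real n ^ 2 * sqrt (2 * Q)"
    unfolding Q_def by (rule conn_bound[OF edge_abs _ i0(1) j(1)]) (use Q_nonneg[of f] in auto)
  hence "(f i0 - f j)^2 \<le> (real n ^ 2 * sqrt (2 * Q))^2"
    by (metis abs_ge_zero power2_abs power_mono)
  also have "\<dots> = real n ^ 4 * (2 * Q)" using Q0 by (simp add: power_mult_distrib)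
  finally have A: "(f i0)^2 \<le> 2 * real n ^ 4 * Q" using M2 by simp
  have "W \<le> real (card {..<n}) * (B * (f i0)^2)" unfolding W_def
  proof (rule sum_bounded_above)
    fix i assume "i \<in> {..<n}"
    hence i: "i < n" by simp
    have "(f i)^2 \<le> (f i0)^2" using i0(2)[OF i] by (simp add: abs_le_square_iff)
    have "(f i)^2 / c i = (1 / c i) * (f i)^2" by simp
    also have "\<dots> \<le> B * (f i0)^2"
      using cB[OF i] \<open>(f i)^2 \<le> (f i0)^2\<close> B1 cpos[OF i] by (intro mult_mono) auto
    finally show "(f i)^2 / c i \<le> B * (f i0)^2" .
  qed
  hence Wb: "W \<le> real n * B * (f i0)^2" by simp
  have "(f i0)^2 \<le> 2 * real n ^ 4 * (\<nu> * W)" using A QW by simp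
  also have "\<dots> \<le> 2 * real n ^ 4 * (\<nu> * (real n * B * (f i0)^2))"
    using Wb nu by (intro mult_left_mono) auto
  also have "\<dots> = (2 * real n ^ 5 * B * \<nu>) * (f i0)^2"
  proof -
    have "real n ^ 5 = real n ^ 4 * real n" by (metis power_Suc2 numeral_eq_Suc pred_numeral_simps(3) numeral_One add_One)
    thus ?thesis by (simp add: algebra_simps)
  qed
  finally have "1 * (f i0)^2 \<le> (2 * real n ^ 5 * B * \<nu>) * (f i0)^2" by simp
  hence le1: "1 \<le> 2 * real n ^ 5 * B * \<nu>" using i0(3) by (subst (asm) mult_le_cancel_right) auto
  have np: "2 * real n ^ 5 * B > 0" using i0(1) B1 by auto
  hence "1 / (2 * real n ^ 5 * B) \<le> \<nu>" using le1 by (simp add: divide_le_eq ac_simps)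
  thus "r \<le> 1 - 1 / (2 * real n ^ 5 * B)" unfolding \<nu>_def by simp
qed


definition CM where "CM = char_matrix (Pm c) 1"

lemma CM_carrier: "CM \<in> carrier_mat n n" unfolding CM_def using Pm_carrier by simp

lemma CM_mulv: assumes v: "v \<in> carrier_vec n" and i: "i < n"
  shows "(CM *\<^sub>v v) $ i = - (c i * Lap (\<lambda>j. v $ j) i)"
proof -
  have m: "map_mat (of_real :: real \<Rightarrow> real) (Pm c) = Pm c" by (intro eq_matI) auto
  have "CM *\<^sub>v v = Pm c *\<^sub>v v + ((-1) \<cdot>\<^sub>m 1\<^sub>m n) *\<^sub>v v"
    unfolding CM_def char_matrix_def using Pm_carrier[of c] v
    by (simp add: add_mult_distrib_mat_vec)
  hence "(CM *\<^sub>v v) $ i = (Pm c *\<^sub>v v) $ i - v $ i" using v i Pm_carrier[of c] by simp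
  also have "(Pm c *\<^sub>v v) $ i = v $ i - c i * Lap (\<lambda>j. v $ j) i"
    using Pm_mulv[OF v i, of c] unfolding m by simp
  finally show ?thesis by simp
qed

definition ones :: "real vec" where "ones = vec n (\<lambda>_. 1)"

lemma ker_const: assumes x: "x \<in> mat_kernel (CM ^\<^sub>m 2)" shows "x = (x $ 0) \<cdot>\<^sub>v ones"
proof -
  have CM2: "CM ^\<^sub>m 2 = CM * CM" using CM_carrier by (simp add: numeral_2_eq_2)
  have C2: "CM ^\<^sub>m 2 \<in> carrier_mat n n" using CM_carrier by simp
  have xc: "x \<in> carrier_vec n" and x0: "(CM ^\<^sub>m 2) *\<^sub>v x = 0\<^sub>v n"
    using mat_kernelD[OF C2 x] by auto
  define y where "y = CM *\<^sub>v x"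
  have yc: "y \<in> carrier_vec n" unfolding y_def using CM_carrier xc by simp
  have "CM *\<^sub>v y = 0\<^sub>v n" unfolding y_def using x0 CM2 CM_carrier xc
    by (simp add: assoc_mult_mat_vec)
  hence "\<And>i. i < n \<Longrightarrow> c i * Lap (\<lambda>j. y $ j) i = 0"
    using CM_mulv[OF yc] by (metis index_zero_vec(1) neg_equal_0_iff_equal)
  hence "\<And>i. i < n \<Longrightarrow> Lap (\<lambda>j. y $ j) i = 0" using cpos by fastforce
  hence yconst: "\<And>i. i < n \<Longrightarrow> y $ i = y $ 0" using Lap0_const npos by blast
  have Lx: "Lap (\<lambda>j. x $ j) i = - (y $ 0) / c i" if i: "i < n" for i
  proof -
    have "y $ i = - (c i * Lap (\<lambda>j. x $ j) i)" unfolding y_def by (rule CM_mulv[OF xc i])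
    thus ?thesis using yconst[OF i] cpos[OF i] by (simp add: field_simps)
  qed
  have "0 = (\<Sum>i<n. Lap (\<lambda>j. x $ j) i)" using sum_Lap by simp
  also have "\<dots> = - (y $ 0) * (\<Sum>i<n. 1 / c i)" unfolding sum_distrib_left by (intro sum.cong refl) (simp add: Lx)
  finally have "y $ 0 * (\<Sum>i<n. 1 / c i) = 0" by simp
  moreover have "(\<Sum>i<n. 1 / c i) > 0" using npos cpos by (intro sum_pos) auto
  ultimately have y0: "y $ 0 = 0" by simp
  have "\<And>i. i < n \<Longrightarrow> Lap (\<lambda>j. x $ j) i = 0" using Lx y0 by simp
  hence xi: "\<And>i. i < n \<Longrightarrow> x $ i = x $ 0" using Lap0_const npos by blast
  show ?thesis
  proof (rule eq_vecI)
    fix i assume "i < dim_vec ((x $ 0) \<cdot>\<^sub>v ones)"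
    hence i: "i < n" unfolding ones_def by simp
    show "x $ i = ((x $ 0) \<cdot>\<^sub>v ones) $ i" using i xi[OF i] unfolding ones_def by simp
  qed (use xc in \<open>simp add: ones_def\<close>)
qed

lemma ones_ker: "ones \<in> mat_kernel (CM ^\<^sub>m 2)"
proof -
  have oc: "ones \<in> carrier_vec n" unfolding ones_def by simp
  have "Lap (\<lambda>j. ones $ j) i = 0" if "i < n" for i unfolding Lap_def ones_def
    using that by (intro sum.neutral) auto
  hence "CM *\<^sub>v ones = 0\<^sub>v n" using CM_mulv[OF oc] CM_carrier by (intro eq_vecI) auto
  moreover have z: "CM *\<^sub>v 0\<^sub>v n = 0\<^sub>v n" using CM_carrier by (intro eq_vecI) auto
  ultimately have "(CM * CM) *\<^sub>v ones = 0\<^sub>v n" using CM_carrier oc by (simp add: assoc_mult_mat_vec)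
  hence "(CM ^\<^sub>m 2) *\<^sub>v ones = 0\<^sub>v n" using CM_carrier by (simp add: numeral_2_eq_2)
  thus ?thesis using oc CM_carrier by (intro mat_kernelI[of _ n n]) auto
qed

lemma kdim: "kernel_dim (CM ^\<^sub>m 2) \<le> 1"
proof -
  have C2: "CM ^\<^sub>m 2 \<in> carrier_mat n n" using CM_carrier by simp
  interpret K: kernel n n "CM ^\<^sub>m 2" by (unfold_locales) (rule C2)
  have sub: "{ones} \<subseteq> mat_kernel (CM ^\<^sub>m 2)" using ones_ker by simp
  have "K.span {ones} = mat_kernel (CM ^\<^sub>m 2)"
  proof
    show "K.span {ones} \<subseteq> mat_kernel (CM ^\<^sub>m 2)" using K.Ker.span_is_subset2[OF sub] by simp
    show "mat_kernel (CM ^\<^sub>m 2) \<subseteq> K.span {ones}"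
    proof
      fix x assume x: "x \<in> mat_kernel (CM ^\<^sub>m 2)"
      have o: "ones \<in> K.span {ones}" using K.Ker.in_own_span[OF sub] by simp
      have "(x $ 0) \<cdot>\<^sub>v ones \<in> K.span {ones}"
        using submodule.smult_closed[OF K.Ker.span_is_submodule[OF sub], of "x $ 0" ones] o by simp
      thus "x \<in> K.span {ones}" using ker_const[OF x] by simp
    qed
  qed
  hence "K.dim \<le> card {ones}" by (intro K.Ker.gen_ge_dim) (use sub in auto)
  thus ?thesis using K.kernel_dim by simp
qed


lemma real_factor: "\<exists>rs. length rs = n \<and> char_poly (Pm c) = (\<Prod>r\<leftarrow>rs. [:- r, 1:])"
proof -
  have A: "Pm c \<in> carrier_mat n n" by (rule Pm_carrier)
  define p where "p = char_poly (Pm c)"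
  have dp: "degree p = n" "coeff p n = 1" using degree_monic_char_poly[OF A] p_def by auto
  define pc where "pc = map_poly complex_of_real p"
  have pc_char: "char_poly (map_mat complex_of_real (Pm c)) = pc" unfolding pc_def p_def by (rule of_real_hom.char_poly_hom[OF A])
  obtain as where as: "Polynomial.smult (lead_coeff pc) (\<Prod>a\<leftarrow>as. [:- a, 1:]) = pc" "length as = degree pc"
    using fundamental_theorem_algebra_factorized by blast
  have dpc: "degree pc = n" unfolding pc_def using dp by simp
  have lc: "lead_coeff pc = 1" using dp dpc unfolding pc_def by (simp add: coeff_map_poly)
  have pc_eq: "pc = (\<Prod>a\<leftarrow>as. [:- a, 1:])" using as(1) lc by simp
  have real: "a = of_real (Re a)" if a: "a \<in> set as" for a
  proof -
    have "poly pc a = 0" unfolding pc_eq using a by (rule linear_poly_root)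
    hence "eigenvalue (map_mat complex_of_real (Pm c)) a"
      using eigenvalue_root_char_poly[of "map_mat complex_of_real (Pm c)" n] A pc_char by simp
    then obtain v where "eigenvector (map_mat complex_of_real (Pm c)) v a" unfolding eigenvalue_def by blast
    hence "Im a = 0" by (rule eig_real_of_complex)
    thus ?thesis by (simp add: complex_eq_iff)
  qed
  define rs where "rs = map Re as"
  have "pc = (\<Prod>r\<leftarrow>rs. [:- of_real r, 1:])" unfolding pc_eq rs_def map_map o_def
    by (rule arg_cong[where f = prod_list], rule map_cong) (use real in auto)
  also have "\<dots> = map_poly of_real (\<Prod>r\<leftarrow>rs. [:- r, 1:])"
    unfolding mpr.hom_prod_list map_map o_def by (rule arg_cong[where f = prod_list], rule map_cong) (auto simp: map_poly_pCons)
  finally have "p = (\<Prod>r\<leftarrow>rs. [:- r, 1:])" unfolding pc_def mpr.eq_iff .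
  moreover have "length rs = n" unfolding rs_def using as(2) dpc by simp
  ultimately show ?thesis unfolding p_def by blast
qed


lemma Pm_ones: "eigenvector (Pm c) ones 1"
proof -
  have oc: "ones \<in> carrier_vec n" unfolding ones_def by simp
  have m: "map_mat (of_real :: real \<Rightarrow> real) (Pm c) = Pm c" by (intro eq_matI) auto
  have L: "Lap (\<lambda>j. ones $ j) i = 0" if "i < n" for i unfolding Lap_def ones_def
    using that by (intro sum.neutral) auto
  have "Pm c *\<^sub>v ones = 1 \<cdot>\<^sub>v ones"
  proof (rule eq_vecI)
    fix i assume "i < dim_vec (1 \<cdot>\<^sub>v ones)"
    hence i: "i < n" unfolding ones_def by simp
    show "(Pm c *\<^sub>v ones) $ i = (1 \<cdot>\<^sub>v ones) $ i"
      using Pm_mulv[OF oc i, of c] L[OF i] unfolding m by simp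
  qed (use Pm_carrier[of c] in \<open>simp add: ones_def\<close>)
  moreover have "ones \<noteq> 0\<^sub>v n"
  proof
    assume "ones = 0\<^sub>v n"
    hence "ones $ 0 = 0\<^sub>v n $ 0" by simp
    thus False using npos unfolding ones_def by simp
  qed
  ultimately show ?thesis unfolding eigenvector_def using Pm_carrier[of c] oc by simp
qed

lemma main: assumes n2: "n \<ge> 2"
  shows "\<exists>lam::nat\<Rightarrow>real. char_poly (Pm c) = (\<Prod>k<n. [:- lam k, 1:]) \<and> lam 0 = 1 \<and> lam 1 < lam 0 \<and>
     (\<forall>k. 1 \<le> k \<and> k + 1 < n \<longrightarrow> lam (k + 1) \<le> lam k) \<and> - 1 < lam (n - 1) \<and>
     Max {\<bar>lam k\<bar> | k. 1 \<le> k \<and> k < n} \<le> 1 - 1 / (2 * real n ^ 5 * B)"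
proof -
  define \<delta> where "\<delta> = 1 / (2 * real n ^ 5 * B)"
  have A: "Pm c \<in> carrier_mat n n" by (rule Pm_carrier)
  obtain rs where len: "length rs = n" and cp: "char_poly (Pm c) = (\<Prod>r\<leftarrow>rs. [:- r, 1:])"
    using real_factor by blast
  have bnd: "-1 + 2 / B \<le> r \<and> r \<le> 1 \<and> (r \<noteq> 1 \<longrightarrow> r \<le> 1 - \<delta>)" if r: "r \<in> set rs" for r
  proof -
    have "poly (char_poly (Pm c)) r = 0" unfolding cp using r by (rule linear_poly_root)
    hence "eigenvalue (Pm c) r" using eigenvalue_root_char_poly[OF A] by simp
    then obtain v where ev: "eigenvector (Pm c) v r" unfolding eigenvalue_def by blast
    show ?thesis using ev_lower[OF ev] ev_upper[OF ev] unfolding \<delta>_def by blast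
  qed
  have one_in: "1 \<in> set rs"
  proof -
    have "eigenvalue (Pm c) 1" unfolding eigenvalue_def using Pm_ones by blast
    hence "poly (\<Prod>r\<leftarrow>rs. [:- r, 1:]) 1 = 0" using eigenvalue_root_char_poly[OF A] cp by simp
    then obtain p where "p \<in> set (map (\<lambda>r. [:- r, 1:]) rs)" "poly p 1 = 0"
      unfolding poly_prod_list_zero_iff by blast
    thus ?thesis by auto
  qed
  have cnt: "count (mset rs) 1 \<le> 1"
  proof -
    obtain n_as where jnf: "jordan_nf (Pm c) n_as" using jordan_nf_exists[OF A cp] by blast
    define xs where "xs = map fst (filter (\<lambda>na. snd na = 1) n_as)"
    have ord: "Polynomial.order 1 (char_poly (Pm c)) = sum_list xs"
      unfolding xs_def by (rule jordan_nf_order[OF jnf])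
    have "[(n, e)\<leftarrow>n_as . e = 1] = filter (\<lambda>na. snd na = 1) n_as" by (intro filter_cong) auto
    hence dg: "dim_gen_eigenspace (Pm c) 1 2 = sum_list (map (min 2) xs)"
      unfolding dim_gen_eigenspace[OF jnf] xs_def by simp
    have "dim_gen_eigenspace (Pm c) 1 2 = kernel_dim (CM ^\<^sub>m 2)"
      unfolding dim_gen_eigenspace_def CM_def by simp
    with kdim dg have "sum_list (map (min 2) xs) \<le> 1" by simp
    moreover have "0 \<notin> set xs" using jnf unfolding jordan_nf_def xs_def by auto
    ultimately have "sum_list xs \<le> 1" using min2_sum by blast
    thus ?thesis using ord unfolding cp order_prod_linear by simp
  qed
  define ys where "ys = sort_key (\<lambda>x. - x) rs"
  have mys: "mset ys = mset rs" unfolding ys_def by simp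
  have sys: "set ys = set rs" using mys by (metis set_mset_mset)
  have lys: "length ys = n" using mys len by (metis size_mset)
  have mono: "ys ! j \<le> ys ! i" if "i \<le> j" "j < n" for i j
  proof -
    have "sorted (map (\<lambda>x. - x) ys)" unfolding ys_def by (rule sorted_sort_key)
    hence "map (\<lambda>x. - x) ys ! i \<le> map (\<lambda>x. - x) ys ! j" using that lys by (intro sorted_nth_mono) auto
    thus ?thesis using that lys by simp
  qed
  have inrs: "ys ! k \<in> set rs" if "k < n" for k using that lys sys by (metis nth_mem)
  define lam where "lam = (\<lambda>k. ys ! k)"
  have l0: "lam 0 = 1"
  proof -
    obtain k where k: "k < n" "ys ! k = 1" using one_in sys lys by (metis in_set_conv_nth)
    have "1 \<le> ys ! 0" using mono[of 0 k] k by simp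
    moreover have "ys ! 0 \<le> 1" using bnd[OF inrs[of 0]] n2 by simp
    ultimately show ?thesis unfolding lam_def by simp
  qed
  have l1: "lam 1 < 1"
  proof -
    have le: "ys ! 1 \<le> 1" using bnd[OF inrs[of 1]] n2 by simp
    obtain a b zs where ys: "ys = a # b # zs" using lys n2
      by (metis One_nat_def Suc_1 Suc_le_length_iff)
    have "ys ! 1 \<noteq> 1"
    proof
      assume "ys ! 1 = 1"
      moreover have "ys ! 0 = 1" using l0 unfolding lam_def .
      ultimately have "count (mset ys) 1 \<ge> 2" unfolding ys by simp
      thus False using cnt mys by simp
    qed
    thus ?thesis using le unfolding lam_def by simp
  qed
  have rest: "-1 + \<delta> \<le> lam k \<and> lam k \<le> 1 - \<delta>" if k: "1 \<le> k" "k < n" for k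
  proof -
    have "ys ! k \<le> ys ! 1" using mono k by simp
    hence "ys ! k \<noteq> 1" using l1 unfolding lam_def by simp
    moreover have "\<delta> \<le> 2 / B"
    proof -
      have "1 \<le> real n ^ 5" using n2 by (intro one_le_power) simp
      hence "1 \<le> 4 * real n ^ 5" by simp
      hence "1 / (2 * real n ^ 5) \<le> 2" by (simp add: divide_le_eq)
      hence "1 / (2 * real n ^ 5) / B \<le> 2 / B" using B1 by (intro divide_right_mono) auto
      hence "1 / (2 * real n ^ 5 * B) \<le> 2 / B" by (simp add: divide_divide_eq_left)
      thus ?thesis unfolding \<delta>_def .
    qed
    ultimately show ?thesis using bnd[OF inrs[OF k(2)]] unfolding lam_def by auto
  qed
  have cpl: "char_poly (Pm c) = (\<Prod>k<n. [:- lam k, 1:])"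
  proof -
    have "(\<Prod>k<n. [:- lam k, 1:]) = prod_list (map (\<lambda>r. [:- r, 1:]) ys)"
      unfolding prod.list_conv_set_nth lam_def using lys by (auto simp: atLeast0LessThan intro!: prod.cong)
    also have "\<dots> = prod_mset (image_mset (\<lambda>r. [:- r, 1:]) (mset ys))"
      by (simp flip: prod_mset_prod_list)
    also have "\<dots> = prod_list (map (\<lambda>r. [:- r, 1:]) rs)" unfolding mys
      by (simp flip: prod_mset_prod_list)
    finally show ?thesis unfolding cp by simp
  qed
  have fin: "finite {\<bar>lam k\<bar> | k. 1 \<le> k \<and> k < n}"
    by (rule finite_subset[of _ "(\<lambda>k. \<bar>lam k\<bar>) ` {..<n}"]) auto
  have ne: "{\<bar>lam k\<bar> | k. 1 \<le> k \<and> k < n} \<noteq> {}" using n2 by auto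
  have mx: "Max {\<bar>lam k\<bar> | k. 1 \<le> k \<and> k < n} \<le> 1 - \<delta>"
  proof (rule Max.boundedI[OF fin ne])
    fix a assume "a \<in> {\<bar>lam k\<bar> | k. 1 \<le> k \<and> k < n}"
    then obtain k where k: "1 \<le> k" "k < n" and a: "a = \<bar>lam k\<bar>" by auto
    from rest[OF k] show "a \<le> 1 - \<delta>" unfolding a by linarith
  qed
  have lastb: "- 1 < lam (n - 1)"
  proof -
    have "-1 + \<delta> \<le> lam (n - 1)" using rest[of "n - 1"] n2 by simp
    moreover have "\<delta> > 0" unfolding \<delta>_def using B1 n2 by simp
    ultimately show ?thesis by simp
  qed
  have monok: "\<forall>k. 1 \<le> k \<and> k + 1 < n \<longrightarrow> lam (k + 1) \<le> lam k" unfolding lam_def using mono by simp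
  show ?thesis using cpl l0 l1 monok lastb mx unfolding \<delta>_def by (intro exI[of _ lam]) simp
qed


end

lemma rat_facts: assumes sr: "small_pos_rational n K x" and xd: "x * real d < 1"
  shows "x > 0" "1 / x \<le> real n ^ K" "x * real d \<le> 1 - 1 / real n ^ K"
proof -
  obtain p q :: nat where pq: "0 < p" "0 < q" "p \<le> n ^ K" "q \<le> n ^ K" and x: "x = real p / real q"
    using sr unfolding small_pos_rational_def by blast
  show "x > 0" using pq x by simp
  have "1 / x = real q / real p" using x by simp
  also have "\<dots> \<le> real q" using pq by (simp add: divide_le_eq)
  also have "\<dots> \<le> real n ^ K" using pq(4) by (metis of_nat_le_iff of_nat_power)
  finally show "1 / x \<le> real n ^ K" .
  have "real p * real d / real q < 1" using xd x by simp
  hence "real (p * d) < real q" using pq by (simp add: divide_less_eq)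
  hence "p * d < q" by linarith
  hence "p * d \<le> q - 1" by simp
  hence "real (p * d) \<le> real q - 1" using pq by linarith
  hence "x * real d \<le> (real q - 1) / real q" unfolding x using pq by (simp add: divide_le_eq divide_right_mono)
  also have "\<dots> = 1 - 1 / real q" using pq by (simp add: field_simps)
  also have "\<dots> \<le> 1 - 1 / real n ^ K"
  proof -
    have "real q \<le> real n ^ K" using pq(4) by (metis of_nat_le_iff of_nat_power)
    moreover have "0 < real n ^ K" using pq(2) \<open>real q \<le> real n ^ K\<close> by linarith
    ultimately have "1 / real n ^ K \<le> 1 / real q" using pq by (intro divide_left_mono) auto
    thus ?thesis by simp
  qed
  finally show "x * real d \<le> 1 - 1 / real n ^ K" .
qed

theorem lemma3p7:
  "\<forall>K::nat. \<exists>K'::nat. \<exists>N0::nat. \<forall>n::nat. \<forall>E c.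
     n \<ge> N0 \<and> n \<ge> 2 \<and> undirected_loopless n E \<and> graph_connected n E \<and>
     (\<forall>i<n. small_pos_rational n K (c i) \<and> c i * real (vdegree n E i) < 1)
     \<longrightarrow>
     (let P = 1\<^sub>m n - diag_mat n c * laplacian n E in
      \<exists>lam::nat \<Rightarrow> real.
        char_poly P = (\<Prod>k<n. [:- lam k, 1:]) \<and>
        lam 0 = 1 \<and> lam 1 < lam 0 \<and>
        (\<forall>k. 1 \<le> k \<and> k + 1 < n \<longrightarrow> lam (k + 1) \<le> lam k) \<and>
        - 1 < lam (n - 1) \<and>
        Max {\<bar>lam k\<bar> | k. 1 \<le> k \<and> k < n} \<le> 1 - 1 / real n ^ K')"
proof (intro allI, goal_cases)
  case (1 K)
  show ?case
  proof (rule exI[of _ "K + 6"], rule exI[of _ "0::nat"], intro allI impI)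
  fix n :: nat and E c
  assume H: "0 \<le> n \<and> n \<ge> 2 \<and> undirected_loopless n E \<and> graph_connected n E \<and>
     (\<forall>i<n. small_pos_rational n K (c i) \<and> c i * real (vdegree n E i) < 1)"
  hence n2: "n \<ge> 2" and ul: "undirected_loopless n E" and gc: "graph_connected n E"
    and ci: "\<And>i. i < n \<Longrightarrow> small_pos_rational n K (c i) \<and> c i * real (vdegree n E i) < 1" by auto
  define B where "B = real n ^ K"
  interpret lsetup n E c B
  proof (unfold_locales)
    show "\<And>i j. E i j \<Longrightarrow> E j i" "\<And>i. \<not> E i i" using ul unfolding undirected_loopless_def by auto
    show "\<And>i. i < n \<Longrightarrow> c i > 0" using ci rat_facts(1) by blast
    show "\<And>i. i < n \<Longrightarrow> 1 / c i \<le> B" unfolding B_def using ci rat_facts(2) by blast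
    show "\<And>i. i < n \<Longrightarrow> c i * real (vdegree n E i) \<le> 1 - 1 / B" unfolding B_def using ci rat_facts(3) by blast
    show "graph_connected n E" by fact
    show "1 \<le> B" unfolding B_def using n2 by (intro one_le_power) simp
    show "0 < n" using n2 by simp
  qed
  obtain lam where L: "char_poly (Pm c) = (\<Prod>k<n. [:- lam k, 1:])" "lam 0 = 1" "lam 1 < lam 0"
     "\<forall>k. 1 \<le> k \<and> k + 1 < n \<longrightarrow> lam (k + 1) \<le> lam k" "- 1 < lam (n - 1)"
     "Max {\<bar>lam k\<bar> | k. 1 \<le> k \<and> k < n} \<le> 1 - 1 / (2 * real n ^ 5 * B)"
    using main[OF n2] by blast
  have "1 / real n ^ (K + 6) \<le> 1 / (2 * real n ^ 5 * B)"
  proof -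
    have "2 * real n ^ 5 * B = 2 * real n ^ (K + 5)" unfolding B_def by (simp add: power_add)
    also have "\<dots> \<le> real n * real n ^ (K + 5)" using n2 by (intro mult_right_mono) auto
    also have "\<dots> = real n ^ (K + 6)" by (simp add: power_add eval_nat_numeral algebra_simps)
    finally have le: "2 * real n ^ 5 * B \<le> real n ^ (K + 6)" .
    have "0 < 2 * real n ^ 5 * B" unfolding B_def using n2 by simp
    moreover have "0 < real n ^ (K + 6)" using n2 by simp
    ultimately show ?thesis using le by (intro divide_left_mono) (auto intro: mult_pos_pos)
  qed
  hence "Max {\<bar>lam k\<bar> | k. 1 \<le> k \<and> k < n} \<le> 1 - 1 / real n ^ (K + 6)" using L(6) by linarith
  thus "let P = 1\<^sub>m n - diag_mat n c * laplacian n E in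
      \<exists>lam::nat \<Rightarrow> real.
        char_poly P = (\<Prod>k<n. [:- lam k, 1:]) \<and>
        lam 0 = 1 \<and> lam 1 < lam 0 \<and>
        (\<forall>k. 1 \<le> k \<and> k + 1 < n \<longrightarrow> lam (k + 1) \<le> lam k) \<and>
        - 1 < lam (n - 1) \<and>
        Max {\<bar>lam k\<bar> | k. 1 \<le> k \<and> k < n} \<le> 1 - 1 / real n ^ (K + 6)"
    using L unfolding Let_def Pm_def by blast
  qed
qed

end
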